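(* For any $p\ge 1$, $$\lim_{x\to\infty}\frac{-\ln\big(\nu_p([x,\infty))\big)}{\Lambda_{\nu_p}^{\ast}(x)}=1.$$
   Context: For $p\ge1$, $\nu_p$ is the probability measure on $\mathbb{R}$ with density $(2\gamma_p)^{-1}\exp(-|x|^p)$, where $\gamma_p=\Gamma(1+1/p)$. $\Lambda_{\nu_p}(t)=\ln\int_{\mathbb{R}}e^{tx}\,d\nu_p(x)$ and $\Lambda_{\nu_p}^{\ast}(x)=\sup_{t\in\mathbb{R}}\{tx-\Lambda_{\nu_p}(t)\}$. *)

theory Defs
  imports "HOL-Probability.Probability"
begin

definition gamma_p :: "real \<Rightarrow> real" where
  "gamma_p p = Gamma (1 + 1 / p)"

definition nu :: "real \<Rightarrow> real measure" where
  "nu p = density lborel (\<lambda>x. ennreal (exp (- (\<bar>x\<bar> powr p)) / (2 * gamma_p p)))"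

definition Lambda :: "real \<Rightarrow> real \<Rightarrow> ereal" where
  "Lambda p t = (let I = (\<integral>\<^sup>+ x. ennreal (exp (t * x)) \<partial>nu p) in
     if I = \<infinity> then \<infinity> else ereal (ln (enn2real I)))"

definition Lambda_star :: "real \<Rightarrow> real \<Rightarrow> ereal" where
  "Lambda_star p x = (SUP t\<in>UNIV. ereal (t * x) - Lambda p t)"

end

theory Submission
  imports Defs "HOL-Real_Asymp.Real_Asymp"
begin


lemma ed_int: assumes "(l::real) > 0"
  shows "(\<integral>\<^sup>+ s. ennreal (exponential_density l s) \<partial>lborel) = 1"
proof -
  interpret prob_space "density lborel (exponential_density l)"
    using prob_space_exponential_density[OF assms] .
  have "emeasure (density lborel (exponential_density l)) UNIV = 1" using emeasure_space_1 by simp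
  then show ?thesis by (subst (asm) emeasure_density) (auto simp: borel_measurable_erlang_density)
qed

lemma ed_int_neg: assumes "(l::real) > 0"
  shows "(\<integral>\<^sup>+ s. ennreal (exponential_density l (- s)) \<partial>lborel) = 1"
proof -
  have "(\<integral>\<^sup>+ s. ennreal (exponential_density l (- s)) \<partial>lborel) =
     (\<integral>\<^sup>+ s. ennreal (exponential_density l s) \<partial>distr lborel borel uminus)"
    by (subst nn_integral_distr) (auto simp: borel_measurable_erlang_density)
  also have "\<dots> = 1" by (simp add: lborel_distr_uminus ed_int[OF assms])
  finally show ?thesis .
qed

lemma exp_abs_finite: assumes "(l::real) > 0"
  shows "(\<integral>\<^sup>+ s. ennreal (exp (- l * \<bar>s\<bar>)) \<partial>lborel) < \<infinity>"
proof -
  have "(\<integral>\<^sup>+ s. ennreal (exp (- l * \<bar>s\<bar>)) \<partial>lborel) \<le>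
     (\<integral>\<^sup>+ s. ennreal (1/l) * (ennreal (exponential_density l s) + ennreal (exponential_density l (- s))) \<partial>lborel)"
  proof (rule nn_integral_mono)
    fix s :: real
    have "exp (- l * \<bar>s\<bar>) \<le> (1/l) * (exponential_density l s + exponential_density l (- s))"
      using assms exponential_density_nonneg[OF assms, of s] exponential_density_nonneg[OF assms, of "-s"]
      by (auto simp: exponential_density_def field_simps mult.commute)
    then show "ennreal (exp (- l * \<bar>s\<bar>)) \<le> ennreal (1/l) * (ennreal (exponential_density l s) + ennreal (exponential_density l (- s)))"
      using assms exponential_density_nonneg[OF assms, of s] exponential_density_nonneg[OF assms, of "-s"]
      by (simp add: ennreal_mult[symmetric] ennreal_plus[symmetric] del: ennreal_plus)
  qed
  also have "\<dots> = ennreal (1/l) * (1 + 1)"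
    by (subst nn_integral_cmult) (auto simp: nn_integral_add borel_measurable_erlang_density ed_int ed_int_neg assms)
  also have "\<dots> < \<infinity>" by (simp add: ennreal_mult_less_top)
  finally show ?thesis .
qed



lemma gp_pos: "p \<ge> 1 \<Longrightarrow> gamma_p p > 0"
  unfolding gamma_p_def by (intro Gamma_real_pos) (auto intro: add_pos_nonneg)

lemma dens_meas[measurable]: "(\<lambda>x. ennreal (exp (- (\<bar>x\<bar> powr p)) / (2 * gamma_p p))) \<in> borel_measurable borel"
  by measurable

lemma expdelta_finite: assumes "(p::real) \<ge> 1" "(l::real) > 0"
  shows "(\<integral>\<^sup>+ s. ennreal (exp (- l * \<bar>s\<bar> powr p)) \<partial>lborel) < \<infinity>"
proof -
  have "(\<integral>\<^sup>+ s. ennreal (exp (- l * \<bar>s\<bar> powr p)) \<partial>lborel) \<le>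
     (\<integral>\<^sup>+ s. ennreal (exp l) * ennreal (exp (- l * \<bar>s\<bar>)) \<partial>lborel)"
  proof (rule nn_integral_mono)
    fix s :: real
    have "\<bar>s\<bar> - 1 \<le> \<bar>s\<bar> powr p"
    proof (cases "\<bar>s\<bar> \<ge> 1")
      case True
      then have "\<bar>s\<bar> powr 1 \<le> \<bar>s\<bar> powr p" using assms by (intro powr_mono) auto
      then show ?thesis using True by simp
    next
      case False then show ?thesis by (smt (verit) powr_ge_zero)
    qed
    then have "l * (\<bar>s\<bar> - 1) \<le> l * \<bar>s\<bar> powr p" using assms by (intro mult_left_mono) auto
    then have "exp (- l * \<bar>s\<bar> powr p) \<le> exp l * exp (- l * \<bar>s\<bar>)"
      by (simp add: exp_add[symmetric] algebra_simps)
    then show "ennreal (exp (- l * \<bar>s\<bar> powr p)) \<le> ennreal (exp l) * ennreal (exp (- l * \<bar>s\<bar>))"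
      by (simp add: ennreal_mult[symmetric])
  qed
  also have "\<dots> = ennreal (exp l) * (\<integral>\<^sup>+ s. ennreal (exp (- l * \<bar>s\<bar>)) \<partial>lborel)"
    by (rule nn_integral_cmult) measurable
  also have "\<dots> < \<infinity>" using exp_abs_finite[OF assms(2)] by (simp add: ennreal_mult_less_top)
  finally show ?thesis .
qed

lemma nu_nn: assumes [measurable]: "f \<in> borel_measurable borel"
  shows "(\<integral>\<^sup>+ x. f x \<partial>nu p) = (\<integral>\<^sup>+ x. ennreal (exp (- (\<bar>x\<bar> powr p)) / (2 * gamma_p p)) * f x \<partial>lborel)"
  unfolding nu_def by (subst nn_integral_density) auto

lemma sets_nu[simp]: "sets (nu p) = sets borel"
  unfolding nu_def by simp

lemma nu_finite: assumes "p \<ge> 1" shows "finite_measure (nu p)"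
proof
  have g: "gamma_p p > 0" using gp_pos[OF assms] .
  have "emeasure (nu p) (space (nu p)) = (\<integral>\<^sup>+ x. ennreal (exp (- (\<bar>x\<bar> powr p)) / (2 * gamma_p p)) \<partial>lborel)"
    unfolding nu_def by (subst emeasure_density) (auto simp: space_density)
  also have "\<dots> = (\<integral>\<^sup>+ x. ennreal (1 / (2 * gamma_p p)) * ennreal (exp (- 1 * (\<bar>x\<bar> powr p))) \<partial>lborel)"
    using g by (intro nn_integral_cong) (simp add: ennreal_mult[symmetric])
  also have "\<dots> = ennreal (1 / (2 * gamma_p p)) * (\<integral>\<^sup>+ x. ennreal (exp (- 1 * (\<bar>x\<bar> powr p))) \<partial>lborel)"
    by (rule nn_integral_cmult) measurable
  also have "\<dots> < \<infinity>" using expdelta_finite[OF assms, of 1] by (simp add: ennreal_mult_less_top)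
  finally show "emeasure (nu p) (space (nu p)) \<noteq> \<infinity>" by simp
qed

lemma nu_lower: assumes "p \<ge> 1" "a \<le> b" "\<And>s. s \<in> {a..b} \<Longrightarrow> \<bar>s\<bar> \<le> M"
  shows "measure (nu p) {a..b} \<ge> (b - a) * exp (- (M powr p)) / (2 * gamma_p p)"
proof -
  interpret finite_measure "nu p" using nu_finite[OF assms(1)] .
  have g: "gamma_p p > 0" using gp_pos[OF assms(1)] .
  have "ennreal ((b - a) * exp (- (M powr p)) / (2 * gamma_p p)) =
      (\<integral>\<^sup>+ x. ennreal (exp (- (M powr p)) / (2 * gamma_p p)) * indicator {a..b} x \<partial>lborel)"
    using assms g by (subst nn_integral_cmult_indicator) (auto simp: ennreal_mult[symmetric] mult.commute)
  also have "\<dots> \<le> (\<integral>\<^sup>+ x. ennreal (exp (- (\<bar>x\<bar> powr p)) / (2 * gamma_p p)) * indicator {a..b} x \<partial>lborel)"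
  proof (rule nn_integral_mono)
    fix x show "ennreal (exp (- (M powr p)) / (2 * gamma_p p)) * indicator {a..b} x
      \<le> ennreal (exp (- (\<bar>x\<bar> powr p)) / (2 * gamma_p p)) * indicator {a..b} x"
    proof (cases "x \<in> {a..b}")
      case True
      then have "\<bar>x\<bar> powr p \<le> M powr p" using assms by (intro powr_mono2) auto
      then show ?thesis using True g by (auto intro!: ennreal_leI divide_right_mono)
    qed auto
  qed
  also have "\<dots> = emeasure (nu p) {a..b}"
    unfolding nu_def by (subst emeasure_density) auto
  finally show ?thesis by (simp add: emeasure_eq_measure)
qed

definition II :: "real \<Rightarrow> real \<Rightarrow> ennreal" where
  "II p t = (\<integral>\<^sup>+ x. ennreal (exp (t * x)) \<partial>nu p)"

lemma II_lower: assumes "S \<in> sets borel" "\<And>s. s \<in> S \<Longrightarrow> t * a \<le> t * s"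
  shows "II p t \<ge> ennreal (exp (t * a)) * emeasure (nu p) S"
proof -
  have "ennreal (exp (t * a)) * emeasure (nu p) S = (\<integral>\<^sup>+ x. ennreal (exp (t * a)) * indicator S x \<partial>nu p)"
    using assms by (subst nn_integral_cmult_indicator) auto
  also have "\<dots> \<le> II p t" unfolding II_def
    using assms by (intro nn_integral_mono) (auto simp: indicator_def)
  finally show ?thesis .
qed



lemma tangent: assumes "(p::real) \<ge> 1" "x > 0"
  shows "x powr p + p * x powr (p - 1) * (s - x) \<le> \<bar>s\<bar> powr p"
proof (cases "s > 0")
  case True
  have d: "((\<lambda>z. z powr p) has_real_derivative p * x powr (p - 1)) (at x within {0<..})"
    using assms by (intro has_field_derivative_at_within[OF has_real_derivative_powr]) auto
  have "s powr p - x powr p \<ge> p * x powr (p - 1) * (s - x)"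
    apply (rule convex_on_imp_above_tangent[OF powr_convex[OF assms(1)] _ _ _ d])
    using assms True  by (auto simp: interior_open)
  then show ?thesis using True by simp
next
  case False
  have e: "x powr (p - 1) * x = x powr p" using assms by (simp add: powr_diff)
  have "p * x powr (p - 1) * s \<le> 0" using False assms
    by (intro mult_nonneg_nonpos) auto
  moreover have "x powr p \<le> p * x powr p" using assms by simp
  ultimately have "x powr p + p * x powr (p - 1) * (s - x) \<le> 0"
    using e by (simp add: algebra_simps)
  then show ?thesis by (smt (verit) powr_ge_zero)
qed

lemma II_upper: assumes "(p::real) \<ge> 1" "x > 0" "0 < d" "d < 1"
  shows "II p ((1 - d) * p * x powr (p - 1)) \<le>
    ennreal (exp ((1 - d) * p * x powr (p - 1) * x - (1 - d) * x powr p)) *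
    (\<integral>\<^sup>+ s. ennreal (exp (- d * \<bar>s\<bar> powr p) / (2 * gamma_p p)) \<partial>lborel)"
proof -
  define t where "t = (1 - d) * p * x powr (p - 1)"
  have g: "gamma_p p > 0" using gp_pos[OF assms(1)] .
  have "II p t = (\<integral>\<^sup>+ s. ennreal (exp (- (\<bar>s\<bar> powr p)) / (2 * gamma_p p)) * ennreal (exp (t * s)) \<partial>lborel)"
    unfolding II_def by (subst nu_nn) auto
  also have "\<dots> \<le> (\<integral>\<^sup>+ s. ennreal (exp (t * x - (1 - d) * x powr p)) * ennreal (exp (- d * \<bar>s\<bar> powr p) / (2 * gamma_p p)) \<partial>lborel)"
  proof (rule nn_integral_mono)
    fix s :: real
    have "(1 - d) * (x powr p + p * x powr (p - 1) * (s - x)) \<le> (1 - d) * \<bar>s\<bar> powr p"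
      using tangent[OF assms(1,2), of s] assms by (intro mult_left_mono) auto
    then have "- (\<bar>s\<bar> powr p) + t * s \<le> t * x - (1 - d) * x powr p + (- d * \<bar>s\<bar> powr p)"
      unfolding t_def by (simp add: algebra_simps)
    then have "exp (- (\<bar>s\<bar> powr p)) * exp (t * s) \<le> exp (t * x - (1 - d) * x powr p) * exp (- d * \<bar>s\<bar> powr p)"
      by (simp add: exp_add[symmetric])
    then have "exp (- (\<bar>s\<bar> powr p)) / (2 * gamma_p p) * exp (t * s) \<le> exp (t * x - (1 - d) * x powr p) * (exp (- d * \<bar>s\<bar> powr p) / (2 * gamma_p p))"
      using g by (simp add: field_simps)
    then show "ennreal (exp (- (\<bar>s\<bar> powr p)) / (2 * gamma_p p)) * ennreal (exp (t * s))
         \<le> ennreal (exp (t * x - (1 - d) * x powr p)) * ennreal (exp (- d * \<bar>s\<bar> powr p) / (2 * gamma_p p))"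
      using g by (simp add: ennreal_mult[symmetric])
  qed
  also have "\<dots> = ennreal (exp (t * x - (1 - d) * x powr p)) * (\<integral>\<^sup>+ s. ennreal (exp (- d * \<bar>s\<bar> powr p) / (2 * gamma_p p)) \<partial>lborel)"
    by (rule nn_integral_cmult) measurable
  finally show ?thesis unfolding t_def .
qed

lemma K_finite: assumes "(p::real) \<ge> 1" "0 < d"
  shows "(\<integral>\<^sup>+ s. ennreal (exp (- d * \<bar>s\<bar> powr p) / (2 * gamma_p p)) \<partial>lborel) < \<infinity>"
proof -
  have g: "gamma_p p > 0" using gp_pos[OF assms(1)] .
  have "(\<integral>\<^sup>+ s. ennreal (exp (- d * \<bar>s\<bar> powr p) / (2 * gamma_p p)) \<partial>lborel) =
     (\<integral>\<^sup>+ s. ennreal (1 / (2 * gamma_p p)) * ennreal (exp (- d * \<bar>s\<bar> powr p)) \<partial>lborel)"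
    using g by (intro nn_integral_cong) (simp add: ennreal_mult[symmetric])
  also have "\<dots> = ennreal (1 / (2 * gamma_p p)) * (\<integral>\<^sup>+ s. ennreal (exp (- d * \<bar>s\<bar> powr p)) \<partial>lborel)"
    by (rule nn_integral_cmult) measurable
  also have "\<dots> < \<infinity>" using expdelta_finite[OF assms] by (simp add: ennreal_mult_less_top)
  finally show ?thesis .
qed

lemma Lambda_II: "Lambda p t = (if II p t = \<infinity> then \<infinity> else ereal (ln (enn2real (II p t))))"
  unfolding Lambda_def II_def Let_def by simp

lemma Lambda_ge: assumes "II p t \<ge> ennreal m" "m > 0"
  shows "Lambda p t \<ge> ereal (ln m)"
proof (cases "II p t = \<infinity>")
  case True then show ?thesis by (simp add: Lambda_II)
next
  case False
  have e: "ennreal (enn2real (II p t)) = II p t" using False by (simp add: ennreal_enn2real_if)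
  have "ennreal m \<le> ennreal (enn2real (II p t))" using assms(1) e by simp
  then have "m \<le> enn2real (II p t)" by (subst (asm) ennreal_le_iff) auto
  then show ?thesis using False assms by (simp add: Lambda_II)
qed

lemma Lambda_le: assumes "II p t \<le> ennreal u" "II p t \<ge> ennreal m" "m > 0"
  shows "Lambda p t \<le> ereal (ln u)"
proof -
  have "II p t < top" using assms(1) by (rule le_less_trans) simp
  then have f: "II p t \<noteq> \<infinity>" by simp
  have e: "ennreal (enn2real (II p t)) = II p t" using f by (simp add: ennreal_enn2real_if)
  have "ennreal m \<le> ennreal (enn2real (II p t))" using assms(2) e by simp
  then have mle: "m \<le> enn2real (II p t)" by (subst (asm) ennreal_le_iff) auto
  have "ennreal m \<le> ennreal u" using assms(1,2) by (rule order.trans[rotated])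
  then have "m \<le> u" using assms(3) by (auto simp: ennreal_le_iff2)
  have "enn2real (II p t) \<le> enn2real (ennreal u)" using assms(1) by (intro enn2real_mono) auto
  then have "enn2real (II p t) \<le> u" using \<open>m \<le> u\<close> assms(3) by simp
  moreover note mle
  ultimately show ?thesis using f assms by (simp add: Lambda_II)
qed

lemma LS_ge: "Lambda_star p x \<ge> ereal (t * x) - Lambda p t"
  unfolding Lambda_star_def by (rule SUP_upper) auto

lemma LS_le: "(\<And>t. ereal (t * x) - Lambda p t \<le> B) \<Longrightarrow> Lambda_star p x \<le> B"
  unfolding Lambda_star_def by (rule SUP_least) auto

lemma m_lower: assumes "p \<ge> 1" "x \<ge> 0"
  shows "measure (nu p) {x..} \<ge> exp (- ((x + 1) powr p)) / (2 * gamma_p p)"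
proof -
  interpret finite_measure "nu p" using nu_finite[OF assms(1)] .
  have "exp (- ((x + 1) powr p)) / (2 * gamma_p p) \<le> measure (nu p) {x..x+1}"
    using nu_lower[OF assms(1), of x "x+1" "x+1"] assms by auto
  also have "\<dots> \<le> measure (nu p) {x..}" by (intro finite_measure_mono) auto
  finally show ?thesis .
qed

lemma m_pos: assumes "p \<ge> 1" "x \<ge> 0" shows "measure (nu p) {x..} > 0"
proof -
  have "exp (- ((x + 1) powr p)) / (2 * gamma_p p) > 0" using gp_pos[OF assms(1)] by simp
  then show ?thesis using m_lower[OF assms] by linarith
qed

lemma m0_pos: assumes "p \<ge> 1" shows "measure (nu p) {-1..0} > 0"
proof -
  have "exp (- (1 powr p)) / (2 * gamma_p p) \<le> measure (nu p) {-1..0}"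
    using nu_lower[OF assms, of "-1" 0 1] by auto
  moreover have "exp (- (1 powr p)) / (2 * gamma_p p) > 0" using gp_pos[OF assms] by simp
  ultimately show ?thesis by linarith
qed

lemma T_upper: assumes "p \<ge> 1" "x \<ge> 0"
  shows "- ln (measure (nu p) {x..}) \<le> (x + 1) powr p + ln (2 * gamma_p p)"
proof -
  have g: "gamma_p p > 0" using gp_pos[OF assms(1)] .
  have "ln (exp (- ((x + 1) powr p)) / (2 * gamma_p p)) \<le> ln (measure (nu p) {x..})"
    using m_lower[OF assms] m_pos[OF assms] g by (subst ln_le_cancel_iff) auto
  then show ?thesis using g by (simp add: ln_div)
qed

lemma LS_upper: assumes "p \<ge> 1" "x \<ge> 0"
  shows "Lambda_star p x \<le> ereal (max (- ln (measure (nu p) {x..})) (- ln (measure (nu p) {-1..0})))"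
proof (rule LS_le)
  interpret finite_measure "nu p" using nu_finite[OF assms(1)] .
  fix t :: real
  show "ereal (t * x) - Lambda p t \<le> ereal (max (- ln (measure (nu p) {x..})) (- ln (measure (nu p) {-1..0})))"
  proof (cases "t \<ge> 0")
    case True
    have mp: "measure (nu p) {x..} > 0" using m_pos[OF assms] .
    have "II p t \<ge> ennreal (exp (t * x)) * emeasure (nu p) {x..}"
      using True by (intro II_lower) (auto intro: mult_left_mono)
    then have "II p t \<ge> ennreal (exp (t * x) * measure (nu p) {x..})"
      by (simp add: emeasure_eq_measure ennreal_mult)
    from Lambda_ge[OF this] have "Lambda p t \<ge> ereal (ln (exp (t * x) * measure (nu p) {x..}))"
      using mp by simp
    then have "Lambda p t \<ge> ereal (t * x + ln (measure (nu p) {x..}))"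
      using mp by (simp add: ln_mult)
    then have "ereal (t * x) - Lambda p t \<le> ereal (- ln (measure (nu p) {x..}))"
      by (cases "Lambda p t") auto
    then show ?thesis by (rule order.trans) auto
  next
    case False
    have mp: "measure (nu p) {-1..0} > 0" using m0_pos[OF assms(1)] .
    have "II p t \<ge> ennreal (exp (t * 0)) * emeasure (nu p) {-1..0}"
      using False by (intro II_lower) (auto intro: mult_nonpos_nonpos)
    then have "II p t \<ge> ennreal (measure (nu p) {-1..0})"
      by (simp add: emeasure_eq_measure)
    from Lambda_ge[OF this mp] have "Lambda p t \<ge> ereal (ln (measure (nu p) {-1..0}))" .
    moreover have "t * x \<le> 0" using False assms by (simp add: mult_nonpos_nonneg)
    ultimately have "ereal (t * x) - Lambda p t \<le> ereal (- ln (measure (nu p) {-1..0}))"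
      by (cases "Lambda p t") auto
    then show ?thesis by (rule order.trans) auto
  qed
qed

definition Kd :: "real \<Rightarrow> real \<Rightarrow> real" where
  "Kd p d = enn2real (\<integral>\<^sup>+ s. ennreal (exp (- d * \<bar>s\<bar> powr p) / (2 * gamma_p p)) \<partial>lborel)"

lemma LS_lower: assumes "p \<ge> 1" "x > 0" "0 < d" "d < 1"
  shows "Lambda_star p x \<ge> ereal ((1 - d) * x powr p - ln (Kd p d))"
proof -
  interpret finite_measure "nu p" using nu_finite[OF assms(1)] .
  define t where "t = (1 - d) * p * x powr (p - 1)"
  have t0: "t \<ge> 0" unfolding t_def using assms by auto
  have mp: "measure (nu p) {x..} > 0" using m_pos[OF assms(1)] assms by auto
  have "II p t \<ge> ennreal (exp (t * x)) * emeasure (nu p) {x..}"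
    using t0 by (intro II_lower) (auto intro: mult_left_mono)
  then have lo: "II p t \<ge> ennreal (exp (t * x) * measure (nu p) {x..})"
    by (simp add: emeasure_eq_measure ennreal_mult)
  have K: "(\<integral>\<^sup>+ s. ennreal (exp (- d * \<bar>s\<bar> powr p) / (2 * gamma_p p)) \<partial>lborel) = ennreal (Kd p d)"
    unfolding Kd_def using K_finite[OF assms(1,3)] by (simp add: ennreal_enn2real_if)
  have "II p t \<le> ennreal (exp (t * x - (1 - d) * x powr p)) * ennreal (Kd p d)"
    using II_upper[OF assms] unfolding t_def K .
  then have up: "II p t \<le> ennreal (exp (t * x - (1 - d) * x powr p) * Kd p d)"
    by (simp add: ennreal_mult Kd_def)
  have "ennreal (exp (t * x) * measure (nu p) {x..}) \<le> ennreal (exp (t * x - (1 - d) * x powr p) * Kd p d)"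
    using lo up by (rule order.trans)
  moreover have "exp (t * x) * measure (nu p) {x..} > 0" using mp by simp
  ultimately have "exp (t * x - (1 - d) * x powr p) * Kd p d > 0"
    by (auto simp: ennreal_le_iff2)
  then have kp: "Kd p d > 0" by (simp add: zero_less_mult_iff)
  have "Lambda p t \<le> ereal (ln (exp (t * x - (1 - d) * x powr p) * Kd p d))"
    using Lambda_le[OF up lo] mp by simp
  also have "\<dots> = ereal (t * x - (1 - d) * x powr p + ln (Kd p d))"
    using kp by (simp add: ln_mult)
  finally have "ereal (t * x) - Lambda p t \<ge> ereal ((1 - d) * x powr p - ln (Kd p d))"
    by (cases "Lambda p t") auto
  then show ?thesis using LS_ge[where p=p and x=x and t=t] by (rule order.trans)
qed

theorem theorem1p2:
  fixes p :: real
  assumes "p \<ge> 1"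
  shows "((\<lambda>x. ereal (- ln (measure (nu p) {x..})) / Lambda_star p x) \<longlongrightarrow> 1) at_top"
proof -
  define T where "T x = - ln (measure (nu p) {x..})" for x
  define A where "A = - ln (measure (nu p) {-1..0})"
  define L where "L = ln (2 * gamma_p p)"
  define l where "l x = real_of_ereal (Lambda_star p x)" for x
  have lowd: "\<forall>\<^sub>F x in at_top. Lambda_star p x \<ge> ereal ((1 - d) * x powr p - ln (Kd p d))"
    if "0 < d" "d < 1" for d
    using eventually_gt_at_top[of 0] by eventually_elim (rule LS_lower[OF assms _ that])
  define C where "C = ln (Kd p (1/2))"
  have lim1: "filterlim (\<lambda>x::real. x powr p / 2 - C) at_top at_top" using assms by real_asymp
  have ev1: "\<forall>\<^sub>F x in at_top. x powr p / 2 - C > max A 0"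
    using lim1 unfolding filterlim_at_top_dense by blast
  have ev0: "\<forall>\<^sub>F x in at_top. Lambda_star p x \<ge> ereal ((1 - 1/2) * x powr p - ln (Kd p (1/2)))"
    by (rule lowd) auto
  have main: "\<forall>\<^sub>F x in at_top. Lambda_star p x = ereal (l x) \<and> 0 < l x \<and> l x \<le> T x"
    using eventually_ge_at_top[of 0] ev0 ev1
  proof eventually_elim
    case (elim x)
    have up: "Lambda_star p x \<le> ereal (max (T x) A)"
      using LS_upper[OF assms elim(1)] unfolding T_def A_def .
    have lo: "ereal (x powr p / 2 - C) \<le> Lambda_star p x"
      using elim(2) unfolding C_def by (simp add: field_simps)
    have eq: "Lambda_star p x = ereal (l x)"
      using up lo unfolding l_def by (cases "Lambda_star p x") (auto simp: max_def split: if_splits)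
    have "x powr p / 2 - C \<le> l x" "l x \<le> max (T x) A" using up lo eq by (auto simp: max_def split: if_splits)
    then show ?case using eq elim(3) by auto
  qed
  have r: "((\<lambda>x. T x / l x) \<longlongrightarrow> 1) at_top"
  proof (rule order_tendstoI)
    fix a :: real assume "a < 1"
    show "\<forall>\<^sub>F x in at_top. a < T x / l x"
      using main
    proof eventually_elim
      case (elim x)
      then have "1 \<le> T x / l x" by simp
      then show ?case using \<open>a < 1\<close> by linarith
    qed
  next
    fix b :: real assume b: "1 < b"
    define q where "q = (1 + 1/b) / 2"
    have q: "1/b < q" "q < 1" "0 < q" using b unfolding q_def by (auto simp: field_simps)
    have qb: "1/q < b" using q b by (simp add: field_simps)
    define Cq where "Cq = ln (Kd p (1 - q))"
    have lim: "((\<lambda>x. ((x + 1) powr p + L) / (q * x powr p - Cq)) \<longlongrightarrow> 1/q) at_top"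
      using assms q by real_asymp (simp add: field_simps)
    have e1: "\<forall>\<^sub>F x in at_top. ((x + 1) powr p + L) / (q * x powr p - Cq) < b"
      using order_tendstoD(2)[OF lim qb] .
    have lim2: "filterlim (\<lambda>x::real. q * x powr p - Cq) at_top at_top" using assms q by real_asymp
    have e2: "\<forall>\<^sub>F x in at_top. q * x powr p - Cq > 0"
      using lim2 unfolding filterlim_at_top_dense by blast
    have e3: "\<forall>\<^sub>F x in at_top. Lambda_star p x \<ge> ereal (q * x powr p - Cq)"
    proof -
      have "0 < 1 - q" "1 - q < 1" using q by auto
      from lowd[OF this] show ?thesis unfolding Cq_def by simp
    qed
    show "\<forall>\<^sub>F x in at_top. T x / l x < b"
      using e1 e2 e3 main eventually_ge_at_top[of 0]
    proof eventually_elim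
      case (elim x)
      have lx: "q * x powr p - Cq \<le> l x" using elim(3,4) by simp
      have tu: "T x \<le> (x + 1) powr p + L"
        using T_upper[OF assms elim(5)] unfolding T_def L_def .
      have "T x / l x \<le> ((x + 1) powr p + L) / (q * x powr p - Cq)"
        using elim(2,4) lx tu by (intro frac_le) auto
      then show ?case using elim(1) by linarith
    qed
  qed
  have "((\<lambda>x. ereal (T x / l x)) \<longlongrightarrow> ereal 1) at_top" by (rule tendsto_ereal[OF r])
  then have r2: "((\<lambda>x. ereal (T x / l x)) \<longlongrightarrow> 1) at_top" by (simp add: one_ereal_def)
  have "\<forall>\<^sub>F x in at_top. ereal (T x / l x) = ereal (- ln (measure (nu p) {x..})) / Lambda_star p x"
    using main by eventually_elim (auto simp: T_def)
  then show ?thesis using r2 by (rule Lim_transform_eventually[rotated])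
qed

end
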